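(* Let $Z$ be the transport operator. Then: (1) $\ker Z=\ker|Z|=\bigoplus_{k=1}^{N-1}\mathrm{span}\{\varphi_{a_k}:a=n_{k+1},\dots,n_k-1\}$; (2) the restriction of $Z$ to $\operatorname{ran}|Z|$ and the restriction of $Z^*$ to $ZZ^*\mathcal H$ are isometric isomorphisms between $\operatorname{ran}|Z|$ and $ZZ^*\mathcal H$; (3) for $k=1,\dots,N-1$ and $a=0,\dots,n_{k+1}-1$, $Z\varphi_{a_k}=|a_{k+1}\rangle$ and $Z^*|a_{k+1}\rangle=\varphi_{a_k}$.
   Context: Fix $N\ge2$ and integers $n_1\ge n_2\ge\dots\ge n_N\ge1$. Let $\mathcal H=\bigoplus_{k=1}^N E_k$ where $E_k$ has orthonormal basis $\{|a_k\rangle:0\le a\le n_k-1\}$, and let $P_k$ be the orthogonal projection onto $E_k$. For vectors $x,y$, $|x\rangle\langle y|$ is the operator $u\mapsto\langle y,u\rangle x$. $\zeta_k=e^{2\pi i/n_k}$, $\varphi_{a_k}=n_k^{-1/2}\sum_{b=0}^{n_k-1}\zeta_k^{-ba}|b_k\rangle$. For $1\le k\le N-1$, $Z_k=n_k^{-1/2}\sum_{b=0}^{n_{k+1}-1}\sum_{a=0}^{n_k-1}\zeta_k^{ba}|b_{k+1}\rangle\langle a_k|$. The transport operator $Z=\bigoplus_{k=1}^{N-1}Z_k$ is the operator from $\bigoplus_{k=1}^{N-1}E_k$ into $\mathcal H$ which equals $Z_k$ on $E_k$; $Z^*$ is its adjoint (mapping $\bigoplus_{k=2}^NE_k$ into $\bigoplus_{k=1}^{N-1}E_k$)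 and $|Z|=Z^*Z$. *)

theory Defs
  imports Complex_Main
begin

text \<open>Vectors of H = E_1 + ... + E_N are represented as functions
  v :: nat => nat => complex, where v k a is the coordinate of v along the
  basis vector a_k (1 <= k <= N, a < n k); all other values are zero.\<close>

type_synonym vec = "nat \<Rightarrow> nat \<Rightarrow> complex"

definition Hsp :: "nat \<Rightarrow> (nat \<Rightarrow> nat) \<Rightarrow> vec set" where
  "Hsp N n = {v. \<forall>k a. \<not> (1 \<le> k \<and> k \<le> N \<and> a < n k) \<longrightarrow> v k a = 0}"

definition Zdom :: "nat \<Rightarrow> (nat \<Rightarrow> nat) \<Rightarrow> vec set" where
  "Zdom N n = {v \<in> Hsp N n. \<forall>a. v N a = 0}"

definition hinner :: "nat \<Rightarrow> (nat \<Rightarrow> nat) \<Rightarrow> vec \<Rightarrow> vec \<Rightarrow> complex" where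
  "hinner N n x y = (\<Sum>k\<in>{1..N}. \<Sum>a<n k. cnj (x k a) * y k a)"

definition hnorm :: "nat \<Rightarrow> (nat \<Rightarrow> nat) \<Rightarrow> vec \<Rightarrow> real" where
  "hnorm N n x = sqrt (Re (hinner N n x x))"

definition zeta :: "(nat \<Rightarrow> nat) \<Rightarrow> nat \<Rightarrow> complex" where
  "zeta n k = cis (2 * pi / real (n k))"

definition ket :: "nat \<Rightarrow> nat \<Rightarrow> vec" where
  "ket k a = (\<lambda>j b. if j = k \<and> b = a then 1 else 0)"

definition phi :: "(nat \<Rightarrow> nat) \<Rightarrow> nat \<Rightarrow> nat \<Rightarrow> vec" where
  "phi n k a = (\<lambda>j b. if j = k \<and> b < n k
      then complex_of_real (1 / sqrt (real (n k))) * inverse (zeta n k ^ (b * a)) else 0)"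

text \<open>The transport operator Z = (+)_{k=1}^{N-1} Z_k, where
  Z_k = n_k^{-1/2} sum_{b<n_{k+1}} sum_{a<n_k} zeta_k^{ba} |b_{k+1}><a_k|.\<close>
definition Zop :: "nat \<Rightarrow> (nat \<Rightarrow> nat) \<Rightarrow> vec \<Rightarrow> vec" where
  "Zop N n x = (\<lambda>j b. if 2 \<le> j \<and> j \<le> N \<and> b < n j
      then (\<Sum>a<n (j - 1). complex_of_real (1 / sqrt (real (n (j - 1))))
                             * zeta n (j - 1) ^ (b * a) * x (j - 1) a)
      else 0)"

text \<open>Its adjoint Z^* (conjugate transpose), mapping (+)_{k=2}^N E_k into
  (+)_{k=1}^{N-1} E_k (the E_1-component of its argument is ignored).\<close>
definition Zadj :: "nat \<Rightarrow> (nat \<Rightarrow> nat) \<Rightarrow> vec \<Rightarrow> vec" where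
  "Zadj N n y = (\<lambda>k a. if 1 \<le> k \<and> k \<le> N - 1 \<and> a < n k
      then (\<Sum>b<n (k + 1). complex_of_real (1 / sqrt (real (n k)))
                             * cnj (zeta n k ^ (b * a)) * y (k + 1) b)
      else 0)"

text \<open>|Z| = Z^* Z (as in the paper).\<close>
definition absZ :: "nat \<Rightarrow> (nat \<Rightarrow> nat) \<Rightarrow> vec \<Rightarrow> vec" where
  "absZ N n x = Zadj N n (Zop N n x)"

definition zerovec :: vec where "zerovec = (\<lambda>j b. 0)"

definition cspan_fam :: "'i set \<Rightarrow> ('i \<Rightarrow> vec) \<Rightarrow> vec set" where
  "cspan_fam I f = {(\<lambda>j b. \<Sum>i\<in>I. c i * f i j b) | c. True}"

definition isometric_iso :: "nat \<Rightarrow> (nat \<Rightarrow> nat) \<Rightarrow> (vec \<Rightarrow> vec) \<Rightarrow> vec set \<Rightarrow> vec set \<Rightarrow> bool" where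
  "isometric_iso N n T A B \<longleftrightarrow> bij_betw T A B \<and> (\<forall>x\<in>A. hnorm N n (T x) = hnorm N n x)"

end

theory Submission
  imports Defs
begin

lemma cis_pow_cnj: "cis t ^ k * cnj (cis t ^ k) = 1"
  by (simp add: cis_cnj power_mult_distrib[symmetric] cis_mult)

lemma cis_pow_inv: "inverse (cis t ^ k) = cnj (cis t ^ k)"
  by (metis cis_cnj cis_inverse complex_cnj_power power_inverse)

lemma geo0:
  assumes "0 < d" "d < m"
  shows "(\<Sum>a<m. (cis (2*pi/real m) ^ d) ^ a) = 0"
proof -
  let ?w = "cis (2*pi/real m) ^ d"
  have m0: "m > 0" using assms by simp
  have inj: "inj_on (\<lambda>k. cis (2 * pi * real k / real m)) {..<m}"
    using bij_betw_roots_unity[OF m0] by (simp add: bij_betw_def)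
  have "cis (2 * pi * real d / real m) \<noteq> cis (2 * pi * real 0 / real m)"
    using inj_onD[OF inj] assms by fastforce
  then have w1: "?w \<noteq> 1" by (simp add: DeMoivre mult_ac)
  have "?w ^ m = (cis (2*pi/real m) ^ m) ^ d" by (simp add: power_mult[symmetric] mult.commute)
  also have "cis (2*pi/real m) ^ m = 1" using m0 by (simp add: DeMoivre)
  finally have wm: "?w ^ m = 1" by simp
  show ?thesis by (subst geometric_sum[OF w1]) (simp add: wm)
qed

lemma orth:
  assumes "b < m" "c < m"
  shows "(\<Sum>a<m. cis (2*pi/real m) ^ (b*a) * cnj (cis (2*pi/real m) ^ (c*a)))
         = (if b = c then of_nat m else 0)"
proof -
  let ?z = "cis (2*pi/real m)"
  have gen: "(\<Sum>a<m. ?z ^ (b*a) * cnj (?z ^ (c*a))) = 0" if "c < b" "b < m" for b c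
  proof -
    have "(\<Sum>a<m. ?z ^ (b*a) * cnj (?z ^ (c*a))) = (\<Sum>a<m. (?z ^ (b - c)) ^ a)"
    proof (rule sum.cong[OF refl])
      fix a
      have "b * a = c * a + (b - c) * a" using that by (simp add: algebra_simps)
      then have "?z ^ (b*a) = ?z ^ (c*a) * (?z ^ (b - c)) ^ a"
        by (simp add: power_add power_mult)
      then show "?z ^ (b*a) * cnj (?z ^ (c*a)) = (?z ^ (b - c)) ^ a"
        using cis_pow_cnj[of "2*pi/real m" "c*a"] by (simp add: algebra_simps)
    qed
    also have "\<dots> = 0" using that by (intro geo0) auto
    finally show ?thesis .
  qed
  show ?thesis
  proof (cases "b = c")
    case True
    then show ?thesis using cis_pow_cnj by simp
  next
    case False
    show ?thesis
    proof (cases "c < b")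
      case True then show ?thesis using gen assms False by simp
    next
      case F2: False
      then have "c > b" using False by simp
      then have "(\<Sum>a<m. ?z ^ (c*a) * cnj (?z ^ (b*a))) = 0" using gen assms by simp
      then have "cnj (\<Sum>a<m. ?z ^ (c*a) * cnj (?z ^ (b*a))) = 0" by simp
      then show ?thesis using False by (simp add: mult.commute)
    qed
  qed
qed


locale setting =
  fixes N :: nat and n :: "nat \<Rightarrow> nat"
  assumes N2: "N \<ge> 2"
    and npos: "\<forall>k\<in>{1..N}. n k \<ge> 1"
    and ndec: "\<forall>k. 1 \<le> k \<and> k < N \<longrightarrow> n (k + 1) \<le> n k"
begin

lemma npos': "1 \<le> k \<Longrightarrow> k \<le> N \<Longrightarrow> n k > 0"
proof -
  assume "1 \<le> k" "k \<le> N"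
  then have "k \<in> {1..N}" by simp
  with npos show "n k > 0" by force
qed

lemma ndec': "1 \<le> k \<Longrightarrow> k < N \<Longrightarrow> n (Suc k) \<le> n k"
  using ndec by fastforce

lemma ss: "1 \<le> k \<Longrightarrow> k \<le> N \<Longrightarrow>
  complex_of_real (1 / sqrt (real (n k))) * complex_of_real (1 / sqrt (real (n k))) * of_nat (n k) = 1"
proof -
  assume "1 \<le> k" "k \<le> N"
  then have p: "real (n k) > 0" using npos' by simp
  have "complex_of_real (1 / sqrt (real (n k))) * complex_of_real (1 / sqrt (real (n k))) * of_nat (n k)
      = complex_of_real ((1 / sqrt (real (n k))) * (1 / sqrt (real (n k))) * real (n k))"
    by (simp only: of_real_mult of_real_of_nat_eq)
  also have "(1 / sqrt (real (n k))) * (1 / sqrt (real (n k))) * real (n k) = 1"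
  proof -
    have "sqrt (real (n k)) * sqrt (real (n k)) = real (n k)" using p by simp
    moreover have "sqrt (real (n k)) > 0" using p by simp
    ultimately show ?thesis by (simp add: field_simps)
  qed
  finally show ?thesis by simp
qed

lemma orthz:
  assumes "b < n k" "c < n k"
  shows "(\<Sum>a<n k. zeta n k ^ (b*a) * cnj (zeta n k ^ (c*a))) = (if b = c then of_nat (n k) else 0)"
  unfolding zeta_def using orth[OF assms] .

lemma Zop_Zadj:
  "Zop N n (Zadj N n y) = (\<lambda>j b. if 2 \<le> j \<and> j \<le> N \<and> b < n j then y j b else 0)"
proof (rule ext, rule ext)
  fix j b
  show "Zop N n (Zadj N n y) j b = (if 2 \<le> j \<and> j \<le> N \<and> b < n j then y j b else 0)"
  proof (cases "2 \<le> j \<and> j \<le> N \<and> b < n j")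
    case True
    define k where "k = j - 1"
    have jk: "j = Suc k" "1 \<le> k" "k < N" using True k_def by auto
    have nk: "n (Suc k) \<le> n k" "n k > 0" using jk ndec' npos' by auto
    have bk: "b < n (Suc k)" using True jk by simp
    let ?z = "zeta n k" and ?s = "complex_of_real (1 / sqrt (real (n k)))"
    have "Zop N n (Zadj N n y) j b = (\<Sum>a<n k. ?s * ?z^(b*a) *
            (\<Sum>c<n (Suc k). ?s * cnj (?z^(c*a)) * y (Suc k) c))"
      unfolding Zop_def Zadj_def using True jk by (auto intro!: sum.cong)
    also have "\<dots> = (\<Sum>c<n (Suc k). y (Suc k) c * (?s * ?s * (\<Sum>a<n k. ?z^(b*a) * cnj (?z^(c*a)))))"
    proof -
      have "(\<Sum>a<n k. ?s * ?z^(b*a) * (\<Sum>c<n (Suc k). ?s * cnj (?z^(c*a)) * y (Suc k) c))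
          = (\<Sum>a<n k. \<Sum>c<n (Suc k). y (Suc k) c * (?s * ?s * (?z^(b*a) * cnj (?z^(c*a)))))"
        by (simp add: sum_distrib_left mult_ac)
      also have "\<dots> = (\<Sum>c<n (Suc k). \<Sum>a<n k. y (Suc k) c * (?s * ?s * (?z^(b*a) * cnj (?z^(c*a)))))"
        by (rule sum.swap)
      also have "\<dots> = (\<Sum>c<n (Suc k). y (Suc k) c * (?s * ?s * (\<Sum>a<n k. ?z^(b*a) * cnj (?z^(c*a)))))"
        by (simp add: sum_distrib_left)
      finally show ?thesis .
    qed
    also have "\<dots> = (\<Sum>c<n (Suc k). y (Suc k) c * (if b = c then 1 else 0))"
    proof (rule sum.cong[OF refl])
      fix c assume "c \<in> {..<n (Suc k)}"
      then have "c < n k" using nk by simp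
      moreover have "b < n k" using bk nk by simp
      ultimately show "y (Suc k) c * (?s * ?s * (\<Sum>a<n k. ?z^(b*a) * cnj (?z^(c*a))))
          = y (Suc k) c * (if b = c then 1 else 0)"
        using orthz ss[of k] jk by simp
    qed
    also have "\<dots> = y j b" using bk jk by (simp add: if_distrib cong: if_cong)
    finally show ?thesis using True by simp
  next
    case False
    then show ?thesis unfolding Zop_def by (simp only: if_not_P[OF False] if_False)
  qed
qed


lemma adjoint: "hinner N n (Zadj N n y) x = hinner N n y (Zop N n x)"
proof -
  define T where "T = (\<Sum>k\<in>{1..N-1}. \<Sum>a<n k. \<Sum>b<n (Suc k).
      complex_of_real (1 / sqrt (real (n k))) * zeta n k ^ (b*a) * cnj (y (Suc k) b) * x k a)"
  have L: "hinner N n (Zadj N n y) x = T"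
  proof -
    have e: "{1..N} = insert N {1..N-1}" using N2 by auto
    have z: "Zadj N n y N a = 0" for a unfolding Zadj_def using N2 by auto
    have "hinner N n (Zadj N n y) x = (\<Sum>k\<in>{1..N-1}. \<Sum>a<n k. cnj (Zadj N n y k a) * x k a)"
      unfolding hinner_def e using N2 by (simp add: z)
    also have "\<dots> = T" unfolding T_def
    proof (rule sum.cong[OF refl], rule sum.cong[OF refl])
      fix k a assume "k \<in> {1..N-1}" "a \<in> {..<n k}"
      then have g: "1 \<le> k \<and> k \<le> N - 1 \<and> a < n k" by auto
      show "cnj (Zadj N n y k a) * x k a = (\<Sum>b<n (Suc k).
          complex_of_real (1 / sqrt (real (n k))) * zeta n k ^ (b*a) * cnj (y (Suc k) b) * x k a)"
        unfolding Zadj_def using g by (simp add: sum_distrib_right)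
    qed
    finally show ?thesis .
  qed
  have R: "hinner N n y (Zop N n x) = T"
  proof -
    have e: "{1..N} = insert 1 {2..N}" using N2 by auto
    have e2: "{2..N} = Suc ` {1..N-1}" using N2 by simp
    have z: "Zop N n x (Suc 0) b = 0" for b unfolding Zop_def by simp
    have "hinner N n y (Zop N n x) = (\<Sum>j\<in>{2..N}. \<Sum>b<n j. cnj (y j b) * Zop N n x j b)"
      unfolding hinner_def e by (simp add: z)
    also have "\<dots> = (\<Sum>k\<in>{1..N-1}. \<Sum>b<n (Suc k). cnj (y (Suc k) b) * Zop N n x (Suc k) b)"
      unfolding e2 by (subst sum.reindex) auto
    also have "\<dots> = T" unfolding T_def
    proof (rule sum.cong[OF refl])
      fix k assume "k \<in> {1..N-1}"
      then have g: "1 \<le> k" "k < N" by auto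
      have "(\<Sum>b<n (Suc k). cnj (y (Suc k) b) * Zop N n x (Suc k) b)
          = (\<Sum>b<n (Suc k). \<Sum>a<n k.
             complex_of_real (1 / sqrt (real (n k))) * zeta n k ^ (b*a) * cnj (y (Suc k) b) * x k a)"
        unfolding Zop_def using g by (auto simp: sum_distrib_left mult_ac intro!: sum.cong)
      also have "\<dots> = (\<Sum>a<n k. \<Sum>b<n (Suc k).
             complex_of_real (1 / sqrt (real (n k))) * zeta n k ^ (b*a) * cnj (y (Suc k) b) * x k a)"
        by (rule sum.swap)
      finally show "(\<Sum>b<n (Suc k). cnj (y (Suc k) b) * Zop N n x (Suc k) b) = (\<Sum>a<n k. \<Sum>b<n (Suc k).
             complex_of_real (1 / sqrt (real (n k))) * zeta n k ^ (b*a) * cnj (y (Suc k) b) * x k a)" .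
    qed
    finally show ?thesis .
  qed
  show ?thesis using L R by simp
qed


definition H2 :: "vec set" where "H2 = {y \<in> Hsp N n. \<forall>b. y 1 b = 0}"

lemma hinner_zero:
  assumes v: "v \<in> Hsp N n" and h: "hinner N n v v = 0"
  shows "v = zerovec"
proof -
  have pt: "cnj z * z = complex_of_real ((cmod z)^2)" for z
    using complex_norm_square[of z] by (simp only: mult.commute)
  have "hinner N n v v = complex_of_real (\<Sum>k\<in>{1..N}. \<Sum>a<n k. (cmod (v k a))^2)"
    unfolding hinner_def of_real_sum pt by (rule refl)
  with h have s0: "(\<Sum>k\<in>{1..N}. \<Sum>a<n k. (cmod (v k a))^2) = 0" by (simp only: of_real_eq_0_iff)
  have s1: "\<forall>k\<in>{1..N}. (\<Sum>a<n k. (cmod (v k a))^2) = 0"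
    using sum_nonneg_eq_0_iff[of "{1..N}" "\<lambda>k. \<Sum>a<n k. (cmod (v k a))^2"] s0
    by (simp add: sum_nonneg)
  have "(cmod (v k a))^2 = 0" if "k \<in> {1..N}" "a < n k" for k a
  proof -
    have "(\<Sum>a<n k. (cmod (v k a))^2) = 0" using s1 that by blast
    then have "\<forall>a\<in>{..<n k}. (cmod (v k a))^2 = 0"
      using sum_nonneg_eq_0_iff[of "{..<n k}" "\<lambda>a. (cmod (v k a))^2"] by simp
    then show ?thesis using that by simp
  qed
  then have "v k a = 0" if "1 \<le> k" "k \<le> N" "a < n k" for k a using that by simp
  moreover have "v k a = 0" if "\<not> (1 \<le> k \<and> k \<le> N \<and> a < n k)" for k a
    using v that unfolding Hsp_def by blast
  ultimately show ?thesis unfolding zerovec_def by (intro ext) blast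
qed

lemma Zop_H2: "Zop N n x \<in> H2"
  unfolding H2_def Hsp_def Zop_def by auto

lemma Zadj_Zdom: "Zadj N n y \<in> Zdom N n"
  unfolding Zdom_def Hsp_def Zadj_def using N2 by auto

lemma Zop_Zadj_H2: "y \<in> H2 \<Longrightarrow> Zop N n (Zadj N n y) = y"
proof (intro ext)
  fix j b assume y: "y \<in> H2"
  show "Zop N n (Zadj N n y) j b = y j b"
  proof (cases "2 \<le> j \<and> j \<le> N \<and> b < n j")
    case True then show ?thesis unfolding Zop_Zadj by simp
  next
    case False
    then have "j = 0 \<or> j = 1 \<or> \<not> (1 \<le> j \<and> j \<le> N \<and> b < n j)" by auto
    then have "y j b = 0" using y unfolding H2_def Hsp_def by auto
    then show ?thesis unfolding Zop_Zadj using False by simp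
  qed
qed

lemma H2_Hsp: "H2 \<subseteq> Hsp N n" unfolding H2_def by auto

lemma Zadj_norm: "y \<in> H2 \<Longrightarrow> hnorm N n (Zadj N n y) = hnorm N n y"
  unfolding hnorm_def by (simp add: adjoint Zop_Zadj_H2)

lemma img1: "Zop N n ` Zadj N n ` Hsp N n = H2"
proof
  show "Zop N n ` Zadj N n ` Hsp N n \<subseteq> H2" using Zop_H2 by auto
  show "H2 \<subseteq> Zop N n ` Zadj N n ` Hsp N n"
  proof
    fix y assume "y \<in> H2"
    then have "y = Zop N n (Zadj N n y)" "y \<in> Hsp N n" using Zop_Zadj_H2 H2_Hsp by auto
    then show "y \<in> Zop N n ` Zadj N n ` Hsp N n" by blast
  qed
qed

lemma img2: "absZ N n ` Zdom N n = Zadj N n ` H2"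
proof
  show "absZ N n ` Zdom N n \<subseteq> Zadj N n ` H2" unfolding absZ_def using Zop_H2 by auto
  show "Zadj N n ` H2 \<subseteq> absZ N n ` Zdom N n"
  proof
    fix x assume "x \<in> Zadj N n ` H2"
    then obtain y where y: "y \<in> H2" "x = Zadj N n y" by blast
    then have "x = absZ N n (Zadj N n y)" unfolding absZ_def using Zop_Zadj_H2 by simp
    then show "x \<in> absZ N n ` Zdom N n" using Zadj_Zdom by blast
  qed
qed

lemma iso1: "isometric_iso N n (Zop N n) (absZ N n ` Zdom N n) (Zop N n ` Zadj N n ` Hsp N n)"
  unfolding img1 img2 isometric_iso_def
proof (intro conjI ballI)
  show "bij_betw (Zop N n) (Zadj N n ` H2) H2"
  proof (rule bij_betwI')
    fix x1 x2 assume "x1 \<in> Zadj N n ` H2" "x2 \<in> Zadj N n ` H2"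
    then obtain y1 y2 where "y1 \<in> H2" "y2 \<in> H2" "x1 = Zadj N n y1" "x2 = Zadj N n y2" by blast
    then show "(Zop N n x1 = Zop N n x2) = (x1 = x2)" using Zop_Zadj_H2 by metis
  next
    fix x assume "x \<in> Zadj N n ` H2"
    then show "Zop N n x \<in> H2" using Zop_H2 by blast
  next
    fix y assume "y \<in> H2"
    then show "\<exists>x\<in>Zadj N n ` H2. y = Zop N n x" using Zop_Zadj_H2 by (metis image_eqI)
  qed
  fix x assume "x \<in> Zadj N n ` H2"
  then obtain y where y: "y \<in> H2" "x = Zadj N n y" by blast
  then show "hnorm N n (Zop N n x) = hnorm N n x" by (simp add: Zop_Zadj_H2 Zadj_norm)
qed

lemma iso2: "isometric_iso N n (Zadj N n) (Zop N n ` Zadj N n ` Hsp N n) (absZ N n ` Zdom N n)"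
  unfolding img1 img2 isometric_iso_def
proof (intro conjI ballI)
  show "bij_betw (Zadj N n) H2 (Zadj N n ` H2)"
    unfolding bij_betw_def inj_on_def
    using Zop_Zadj_H2 by metis
  fix x assume "x \<in> H2"
  then show "hnorm N n (Zadj N n x) = hnorm N n x" by (simp add: Zadj_norm)
qed

lemma kers: "{x \<in> Zdom N n. Zop N n x = zerovec} = {x \<in> Zdom N n. absZ N n x = zerovec}"
proof -
  have a: "Zadj N n zerovec = zerovec" unfolding Zadj_def zerovec_def by (intro ext) simp
  have b: "Zop N n x = zerovec" if "absZ N n x = zerovec" for x
  proof -
    have "hinner N n (Zop N n x) (Zop N n x) = hinner N n (Zadj N n (Zop N n x)) x"
      by (simp add: adjoint)
    also have "\<dots> = 0" using that unfolding absZ_def hinner_def zerovec_def by simp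
    finally show ?thesis using hinner_zero Zop_H2 H2_Hsp by blast
  qed
  show ?thesis using a b unfolding absZ_def by auto
qed


lemma phi_eq: "phi n k a = (\<lambda>j b. if j = k \<and> b < n k
    then complex_of_real (1 / sqrt (real (n k))) * cnj (zeta n k ^ (a * b)) else 0)"
proof (intro ext)
  fix j b
  have "inverse (zeta n k ^ (b * a)) = cnj (zeta n k ^ (a * b))"
    unfolding zeta_def using cis_pow_inv by (simp add: mult.commute)
  then show "phi n k a j b = (if j = k \<and> b < n k
    then complex_of_real (1 / sqrt (real (n k))) * cnj (zeta n k ^ (a * b)) else 0)"
    unfolding phi_def by simp
qed

lemma Zop_lin:
  assumes "finite I"
  shows "Zop N n (\<lambda>j b. \<Sum>i\<in>I. c i * f i j b) = (\<lambda>j b. \<Sum>i\<in>I. c i * Zop N n (f i) j b)"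
proof (intro ext)
  fix j b
  show "Zop N n (\<lambda>j b. \<Sum>i\<in>I. c i * f i j b) j b = (\<Sum>i\<in>I. c i * Zop N n (f i) j b)"
  proof (cases "2 \<le> j \<and> j \<le> N \<and> b < n j")
    case True
    let ?s = "complex_of_real (1 / sqrt (real (n (j - 1))))" and ?z = "zeta n (j - 1)"
    have "Zop N n (\<lambda>j b. \<Sum>i\<in>I. c i * f i j b) j b
        = (\<Sum>a<n (j - 1). \<Sum>i\<in>I. c i * (?s * ?z ^ (b * a) * f i (j - 1) a))"
      unfolding Zop_def using True by (simp add: sum_distrib_left sum_divide_distrib mult_ac)
    also have "\<dots> = (\<Sum>i\<in>I. \<Sum>a<n (j - 1). c i * (?s * ?z ^ (b * a) * f i (j - 1) a))"
      by (rule sum.swap)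
    also have "\<dots> = (\<Sum>i\<in>I. c i * Zop N n (f i) j b)"
      unfolding Zop_def using True by (simp add: sum_distrib_left)
    finally show ?thesis .
  next
    case False
    then show ?thesis unfolding Zop_def by (simp only: if_not_P[OF False] if_False mult_zero_right sum.neutral_const)
  qed
qed

lemma Zop_phi_gen:
  assumes k: "1 \<le> k" "k \<le> N - 1" and a0: "a0 < n k"
  shows "Zop N n (phi n k a0) = (\<lambda>j b. if j = Suc k \<and> b < n (Suc k) then (if b = a0 then 1 else 0) else 0)"
proof (intro ext)
  fix j b
  have nk: "n (Suc k) \<le> n k" "n k > 0" using k ndec' npos' by auto
  show "Zop N n (phi n k a0) j b = (if j = Suc k \<and> b < n (Suc k) then (if b = a0 then 1 else 0) else 0)"
  proof (cases "2 \<le> j \<and> j \<le> N \<and> b < n j")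
    case True
    show ?thesis
    proof (cases "j = Suc k")
      case jk: True
      let ?s = "complex_of_real (1 / sqrt (real (n k)))" and ?z = "zeta n k"
      have bk: "b < n k" using True jk nk by simp
      have "Zop N n (phi n k a0) j b = (\<Sum>a<n k. ?s * ?z ^ (b * a) * (?s * cnj (?z ^ (a0 * a))))"
        unfolding Zop_def phi_eq using True jk by (auto simp: mult.commute intro!: sum.cong)
      also have "\<dots> = ?s * ?s * (\<Sum>a<n k. ?z ^ (b * a) * cnj (?z ^ (a0 * a)))"
        by (simp add: sum_distrib_left mult_ac)
      also have "\<dots> = (if b = a0 then 1 else 0)"
        using orthz[OF bk a0] ss[of k] k nk by simp
      finally show ?thesis using jk True by simp
    next
      case False
      then have "j - Suc 0 \<noteq> k" using True by auto
      then show ?thesis unfolding Zop_def phi_eq using True False by simp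
    qed
  next
    case False
    then show ?thesis unfolding Zop_def using k by auto
  qed
qed

lemma Zop_phi:
  assumes k: "1 \<le> k" "k \<le> N - 1" and a0: "a0 < n (k + 1)"
  shows "Zop N n (phi n k a0) = ket (k + 1) a0"
proof -
  have "a0 < n k" proof -
    have "k < N" using k N2 by simp
    then have "n (Suc k) \<le> n k" using ndec' k by simp
    then show ?thesis using a0 by simp
  qed
  then show ?thesis using Zop_phi_gen[OF k] a0 unfolding ket_def by (auto intro!: ext)
qed

lemma Zadj_ket:
  assumes k: "1 \<le> k" "k \<le> N - 1" and a0: "a0 < n (k + 1)"
  shows "Zadj N n (ket (k + 1) a0) = phi n k a0"
proof (intro ext)
  fix j a
  show "Zadj N n (ket (k + 1) a0) j a = phi n k a0 j a"
  proof (cases "1 \<le> j \<and> j \<le> N - 1 \<and> a < n j")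
    case True
    show ?thesis
    proof (cases "j = k")
      case jk: True
      have "Zadj N n (ket (k + 1) a0) j a = (\<Sum>b<n (Suc k).
          complex_of_real (1 / sqrt (real (n k))) * cnj (zeta n k ^ (b * a)) * (if b = a0 then 1 else 0))"
        unfolding Zadj_def ket_def using True jk by simp
      also have "\<dots> = (\<Sum>b<n (Suc k). (if b = a0 then
          complex_of_real (1 / sqrt (real (n k))) * cnj (zeta n k ^ (b * a)) else 0))"
        by (intro sum.cong refl) simp
      also have "\<dots> = complex_of_real (1 / sqrt (real (n k))) * cnj (zeta n k ^ (a0 * a))"
        using a0 by simp
      finally show ?thesis unfolding phi_eq using True jk by simp
    next
      case False
      then show ?thesis unfolding Zadj_def ket_def phi_eq using True by auto
    qed
  next
    case False
    then show ?thesis unfolding Zadj_def phi_eq using k by auto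
  qed
qed


lemma Ieq: "{(k, a). 1 \<le> k \<and> k \<le> N - 1 \<and> n (k + 1) \<le> a \<and> a < n k}
    = Sigma {1..N-1} (\<lambda>k. {n (Suc k)..<n k})"
  by auto

lemma sum_I: "(\<Sum>i\<in>{(k, a). 1 \<le> k \<and> k \<le> N - 1 \<and> n (k + 1) \<le> a \<and> a < n k}.
      c i * (case i of (k, a) \<Rightarrow> phi n k a) j b)
    = (\<Sum>k\<in>{1..N-1}. \<Sum>a\<in>{n (Suc k)..<n k}. c (k, a) * phi n k a j b)"
  unfolding Ieq by (subst sum.Sigma) (auto intro!: sum.cong)

lemma sum_I2: "(\<Sum>i\<in>{(k, a). 1 \<le> k \<and> k \<le> N - 1 \<and> n (k + 1) \<le> a \<and> a < n k}.
      c i * (case i of (k, a) \<Rightarrow> phi n k a) j b)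
    = (if 1 \<le> j \<and> j \<le> N - 1 \<and> b < n j then
        (\<Sum>a\<in>{n (Suc j)..<n j}. c (j, a) * (complex_of_real (1 / sqrt (real (n j))) * cnj (zeta n j ^ (a * b))))
       else 0)"
proof -
  define h where "h k = (\<Sum>a\<in>{n (Suc k)..<n k}. c (k, a) * phi n k a j b)" for k
  have "(\<Sum>k\<in>{1..N-1}. h k) = (\<Sum>k\<in>{1..N-1}. if k = j then h j else 0)"
    by (intro sum.cong refl) (auto simp: h_def phi_eq)
  also have "\<dots> = (if j \<in> {1..N-1} then h j else 0)" by simp
  finally have e: "(\<Sum>k\<in>{1..N-1}. h k) = (if j \<in> {1..N-1} then h j else 0)" .
  show ?thesis unfolding sum_I h_def[symmetric] e
    by (auto simp: h_def phi_eq intro!: sum.cong)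
qed

lemma kernel_span:
  "{x \<in> Zdom N n. Zop N n x = zerovec}
     = cspan_fam {(k, a). 1 \<le> k \<and> k \<le> N - 1 \<and> n (k + 1) \<le> a \<and> a < n k} (\<lambda>(k, a). phi n k a)"
  (is "?K = cspan_fam ?I ?f")
proof
  have finI: "finite ?I" unfolding Ieq by auto
  show "cspan_fam ?I ?f \<subseteq> ?K"
  proof
    fix v assume "v \<in> cspan_fam ?I ?f"
    then obtain c where v: "v = (\<lambda>j b. \<Sum>i\<in>?I. c i * ?f i j b)" unfolding cspan_fam_def by blast
    have vz: "v j b = 0" if "\<not> (1 \<le> j \<and> j \<le> N - 1 \<and> b < n j)" for j b
      unfolding v sum_I2 by (simp only: if_not_P[OF that])
    have vN: "v N a = 0" for a by (rule vz) (use N2 in auto)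
    have vH: "v k a = 0" if "\<not> (1 \<le> k \<and> k \<le> N \<and> a < n k)" for k a
      by (rule vz) (use that in auto)
    have "v \<in> Zdom N n" unfolding Zdom_def Hsp_def using vN vH by blast
    moreover have "Zop N n v = zerovec"
    proof -
      have "Zop N n v = (\<lambda>j b. \<Sum>i\<in>?I. c i * Zop N n (?f i) j b)"
        unfolding v by (rule Zop_lin[OF finI])
      also have "\<dots> = zerovec" unfolding zerovec_def
      proof (intro ext sum.neutral ballI)
        fix j b i assume "i \<in> ?I"
        then obtain k a where i: "i = (k, a)" "1 \<le> k" "k \<le> N - 1" "n (Suc k) \<le> a" "a < n k" by auto
        show "c i * Zop N n (?f i) j b = 0"
          unfolding i(1) using Zop_phi_gen[OF i(2,3,5)] i(4) by auto
      qed
      finally show ?thesis .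
    qed
    ultimately show "v \<in> ?K" by simp
  qed
  show "?K \<subseteq> cspan_fam ?I ?f"
  proof
    fix x assume "x \<in> ?K"
    then have xZ: "x \<in> Zdom N n" and x0: "Zop N n x = zerovec" by auto
    define c where "c = (\<lambda>(k, a). \<Sum>a'<n k. complex_of_real (1 / sqrt (real (n k))) * zeta n k ^ (a * a') * x k a')"
    have "x = (\<lambda>j b. \<Sum>i\<in>?I. c i * ?f i j b)"
    proof (intro ext)
      fix j b
      show "x j b = (\<Sum>i\<in>?I. c i * ?f i j b)"
      proof (cases "1 \<le> j \<and> j \<le> N - 1 \<and> b < n j")
        case False
        then have "x j b = 0" using xZ N2 unfolding Zdom_def Hsp_def
          by (cases "j = N") auto
        then show ?thesis unfolding sum_I2 by (simp only: if_not_P[OF False])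
      next
        case True
        let ?s = "complex_of_real (1 / sqrt (real (n j)))" and ?z = "zeta n j"
        let ?g = "\<lambda>a. c (j, a) * (?s * cnj (?z ^ (a * b)))"
        have jN: "j < N" "Suc j \<le> N" using True N2 by auto
        have nj: "n (Suc j) \<le> n j" "n j > 0" using True jN ndec' npos' by auto
        have low: "c (j, a) = 0" if "a < n (Suc j)" for a
        proof -
          have "c (j, a) = Zop N n x (Suc j) a"
            unfolding Zop_def c_def using that True jN by simp
          then show ?thesis using x0 unfolding zerovec_def by simp
        qed
        have full: "(\<Sum>a<n j. ?g a) = x j b"
        proof -
          have "(\<Sum>a<n j. ?g a) = (\<Sum>a<n j. \<Sum>a'<n j. x j a' * (?s * ?s * (?z ^ (a * a') * cnj (?z ^ (a * b)))))"
            unfolding c_def by (simp add: sum_distrib_left sum_distrib_right sum_divide_distrib mult_ac)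
          also have "\<dots> = (\<Sum>a'<n j. \<Sum>a<n j. x j a' * (?s * ?s * (?z ^ (a * a') * cnj (?z ^ (a * b)))))"
            by (rule sum.swap)
          also have "\<dots> = (\<Sum>a'<n j. x j a' * (?s * ?s * (\<Sum>a<n j. ?z ^ (a * a') * cnj (?z ^ (a * b)))))"
            by (simp add: sum_distrib_left)
          also have "\<dots> = (\<Sum>a'<n j. if a' = b then x j b else 0)"
          proof (intro sum.cong refl)
            fix a' assume "a' \<in> {..<n j}"
            then have "a' < n j" by simp
            then show "x j a' * (?s * ?s * (\<Sum>a<n j. ?z ^ (a * a') * cnj (?z ^ (a * b))))
                = (if a' = b then x j b else 0)"
            proof -
              have "(\<Sum>a<n j. ?z ^ (a * a') * cnj (?z ^ (a * b))) = (\<Sum>a<n j. ?z ^ (a' * a) * cnj (?z ^ (b * a)))"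
                by (simp add: mult.commute)
              then show ?thesis using orthz[of a' j b] \<open>a' < n j\<close> True ss[of j] jN by auto
            qed
          qed
          also have "\<dots> = x j b" using True by simp
          finally show ?thesis .
        qed
        have split: "(\<Sum>a<n j. ?g a) = (\<Sum>a<n (Suc j). ?g a) + (\<Sum>a\<in>{n (Suc j)..<n j}. ?g a)"
          using sum.atLeastLessThan_concat[of 0 "n (Suc j)" "n j" ?g] nj
          by (simp add: lessThan_atLeast0)
        have "(\<Sum>a<n (Suc j). ?g a) = 0" using low by simp
        then have "x j b = (\<Sum>a\<in>{n (Suc j)..<n j}. ?g a)" using full split by simp
        then show ?thesis unfolding sum_I2 using True by simp
      qed
    qed
    then show "x \<in> cspan_fam ?I ?f" unfolding cspan_fam_def by blast
  qed
qed

end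

theorem proposition2p9:
  fixes N :: nat and n :: "nat \<Rightarrow> nat"
  assumes N2: "N \<ge> 2"
    and npos: "\<forall>k\<in>{1..N}. n k \<ge> 1"
    and ndec: "\<forall>k. 1 \<le> k \<and> k < N \<longrightarrow> n (k + 1) \<le> n k"
  shows "{x \<in> Zdom N n. Zop N n x = zerovec} = {x \<in> Zdom N n. absZ N n x = zerovec}
       \<and> {x \<in> Zdom N n. Zop N n x = zerovec}
           = cspan_fam {(k, a). 1 \<le> k \<and> k \<le> N - 1 \<and> n (k + 1) \<le> a \<and> a < n k}
                       (\<lambda>(k, a). phi n k a)
       \<and> isometric_iso N n (Zop N n) (absZ N n ` Zdom N n) (Zop N n ` Zadj N n ` Hsp N n)
       \<and> isometric_iso N n (Zadj N n) (Zop N n ` Zadj N n ` Hsp N n) (absZ N n ` Zdom N n)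
       \<and> (\<forall>k a. 1 \<le> k \<and> k \<le> N - 1 \<and> a < n (k + 1) \<longrightarrow>
              Zop N n (phi n k a) = ket (k + 1) a \<and> Zadj N n (ket (k + 1) a) = phi n k a)"
proof -
  interpret S: setting N n using N2 npos ndec by (simp add: setting_def)
  show ?thesis using S.kers S.kernel_span S.iso1 S.iso2 S.Zop_phi S.Zadj_ket by blast
qed

end
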